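(* LexiPS is not sd-weakly-strategyproof if agents may misreport their importance orders: there is a multi-type resource allocation problem with $n=2$ agents and $p=3$ types $F,B,T$, with $D_F=\{1_F,2_F\}$, $D_B=\{1_B,2_B\}$, $D_T=\{1_T,2_T\}$, where both agents have lexicographic preferences with $1_i\rhd^i_j 2_i$ for all types $i$ and both agents $j$, agent 1 has importance order $F\rhd_1 B\rhd_1 T$ and agent 2 has importance order $T\rhd_2 F\rhd_2 B$, such that if agent 2 reports instead the lexicographic preference with the same per-type orders and importance order $F\rhd B\rhd T$ replaced by $F\rhd T\rhd B$, then agent 2's resulting LexiPS allocation weakly stochastically dominates her truthful LexiPS allocation w.r.t. her true preference and differs from it.
   Context: Setting: $N=\{1,\dots,n\}$ agents; $M=D_1\cup\dots\cup D_p$ items with pairwise disjoint types, $|D_i|=n$, unit supply; bundles $\mathcal D=D_1\times\dots\times D_p$, $x_i$ the type-$i$ component. Lexicographic preference: agent $j$ has an importance order $\rhd_j$ over types and orders $\rhd^i_j$ on each $D_i$; $x\succ_j y$ iff there is a type $i$ with $x_i\rhd^i_j y_i$ and $x_{i'}=y_{i'}$ for all $i'\rhd_j i$. $U(\succ,x)=\{y:y\succ x\}\cup\{x\}$; $p$ weakly stochastically dominates $q$ w.r.t. $\succ$ if $\sum_{y\in U(\succ,x)}p_y\ge\sum_{y\in U(\succ,x)}q_y$ for all $x$. LexiPS: remaining supplies start at $1$ and carry across phases. In phase $k=1,\dots,p$ (unit duration each), each agent $j$ eats at rate $1$ her $\rhd^i_j$-most-preferred item with positive remaining supply among items of her $k$-th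 most important type $i$. With $s^i_{j,o}$ the amount of $o\in D_i$ eaten by $j$, the output is $p_{j,x}=\prod_i s^i_{j,x_i}$. *)

theory Defs
  imports Complex_Main
begin

text \<open>
Agents are 0..<n, types are 0..<p, and the items of type i are
encoded as 0..<n (item itm of type i stands for the itm-th element of D_i).
A lexicographic preference of agent j is given by
  imp j       : list of the p types, most important first (importance order),
  ord j i     : list of the n items of type i, most preferred first.
\<close>

definition better_in :: "nat list \<Rightarrow> nat \<Rightarrow> nat \<Rightarrow> bool" where
  "better_in L a b \<longleftrightarrow> (\<exists>u v. u < v \<and> v < length L \<and> L ! u = a \<and> L ! v = b)"

definition bundles :: "nat \<Rightarrow> nat \<Rightarrow> nat list set" where
  "bundles n p = {x. length x = p \<and> (\<forall>i<p. x ! i < n)}"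

definition lex_pref :: "(nat \<Rightarrow> nat list) \<Rightarrow> (nat \<Rightarrow> nat \<Rightarrow> nat list) \<Rightarrow> nat
    \<Rightarrow> nat list \<Rightarrow> nat list \<Rightarrow> bool" where
  "lex_pref imp ord j x y \<longleftrightarrow>
     (\<exists>k < length (imp j). better_in (ord j (imp j ! k)) (x ! (imp j ! k)) (y ! (imp j ! k))
        \<and> (\<forall>k' < k. x ! (imp j ! k') = y ! (imp j ! k')))"

definition upper :: "(nat \<Rightarrow> nat list) \<Rightarrow> (nat \<Rightarrow> nat \<Rightarrow> nat list) \<Rightarrow> nat
    \<Rightarrow> nat list set \<Rightarrow> nat list \<Rightarrow> nat list set" where
  "upper imp ord j B x = {y \<in> B. lex_pref imp ord j y x} \<union> {x}"

definition sd_weak_dom :: "(nat \<Rightarrow> nat list) \<Rightarrow> (nat \<Rightarrow> nat \<Rightarrow> nat list) \<Rightarrow> nat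
    \<Rightarrow> nat list set \<Rightarrow> (nat list \<Rightarrow> real) \<Rightarrow> (nat list \<Rightarrow> real) \<Rightarrow> bool" where
  "sd_weak_dom imp ord j B P Q \<longleftrightarrow>
     (\<forall>x\<in>B. (\<Sum>y\<in>upper imp ord j B x. P y) \<ge> (\<Sum>y\<in>upper imp ord j B x. Q y))"

type_synonym supplyT = "nat \<Rightarrow> nat \<Rightarrow> real"          (* type, item *)
type_synonym eatenT = "nat \<Rightarrow> nat \<Rightarrow> nat \<Rightarrow> real"     (* agent, type, item *)
type_synonym stateT = "supplyT \<times> eatenT \<times> real"       (* remaining time in phase *)

definition tgt :: "(nat \<Rightarrow> nat list) \<Rightarrow> (nat \<Rightarrow> nat \<Rightarrow> nat list) \<Rightarrow> nat \<Rightarrow> supplyT \<Rightarrow> nat \<Rightarrow> nat option" where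
  "tgt imp ord k s j = find (\<lambda>itm. s (imp j ! k) itm > 0) (ord j (imp j ! k))"

definition eats :: "(nat \<Rightarrow> nat list) \<Rightarrow> (nat \<Rightarrow> nat \<Rightarrow> nat list) \<Rightarrow> nat \<Rightarrow> supplyT
    \<Rightarrow> nat \<Rightarrow> nat \<Rightarrow> nat \<Rightarrow> bool" where
  "eats imp ord k s j i itm \<longleftrightarrow> imp j ! k = i \<and> tgt imp ord k s j = Some itm"

definition cnt :: "nat \<Rightarrow> (nat \<Rightarrow> nat list) \<Rightarrow> (nat \<Rightarrow> nat \<Rightarrow> nat list) \<Rightarrow> nat \<Rightarrow> supplyT
    \<Rightarrow> nat \<Rightarrow> nat \<Rightarrow> real" where
  "cnt n imp ord k s i itm = real (card {j. j < n \<and> eats imp ord k s j i itm})"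

text \<open>Length of the next interval: until the phase ends or some eatenT item runs out.\<close>
definition delta :: "nat \<Rightarrow> (nat \<Rightarrow> nat list) \<Rightarrow> (nat \<Rightarrow> nat \<Rightarrow> nat list) \<Rightarrow> nat \<Rightarrow> supplyT
    \<Rightarrow> real \<Rightarrow> real" where
  "delta n imp ord k s t =
     Min (insert t {s (imp j ! k) itm / cnt n imp ord k s (imp j ! k) itm | j itm.
                      j < n \<and> tgt imp ord k s j = Some itm})"

definition ps_step :: "nat \<Rightarrow> (nat \<Rightarrow> nat list) \<Rightarrow> (nat \<Rightarrow> nat \<Rightarrow> nat list) \<Rightarrow> nat \<Rightarrow> stateT \<Rightarrow> stateT" where
  "ps_step n imp ord k st = (case st of (s, e, t) \<Rightarrow>
     let d = delta n imp ord k s t in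
     (\<lambda>i itm. s i itm - d * cnt n imp ord k s i itm,
      \<lambda>j i itm. e j i itm + (if j < n \<and> eats imp ord k s j i itm then d else 0),
      t - d))"

fun ps_phase :: "nat \<Rightarrow> (nat \<Rightarrow> nat list) \<Rightarrow> (nat \<Rightarrow> nat \<Rightarrow> nat list) \<Rightarrow> nat \<Rightarrow> nat \<Rightarrow> stateT \<Rightarrow> stateT" where
  "ps_phase n imp ord k 0 st = st"
| "ps_phase n imp ord k (Suc f) st =
     (if snd (snd st) \<le> 0 then st else ps_phase n imp ord k f (ps_step n imp ord k st))"

text \<open>Run phases 0..<m; supplies carry across phases; each phase has unit duration.
n*p+1 events per phase suffice (each event before the last exhausts an item).\<close>
fun ps_run :: "nat \<Rightarrow> nat \<Rightarrow> (nat \<Rightarrow> nat list) \<Rightarrow> (nat \<Rightarrow> nat \<Rightarrow> nat list) \<Rightarrow> nat \<Rightarrow> supplyT \<times> eatenT" where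
  "ps_run n p imp ord 0 = (\<lambda>i itm. 1, \<lambda>j i itm. 0)"
| "ps_run n p imp ord (Suc k) =
     (case ps_run n p imp ord k of (s, e) \<Rightarrow>
        (case ps_phase n imp ord k (n * p + 1) (s, e, 1) of (s', e', _) \<Rightarrow> (s', e')))"

definition lexips :: "nat \<Rightarrow> nat \<Rightarrow> (nat \<Rightarrow> nat list) \<Rightarrow> (nat \<Rightarrow> nat \<Rightarrow> nat list) \<Rightarrow> nat \<Rightarrow> nat list \<Rightarrow> real" where
  "lexips n p imp ord j x = (\<Prod>i<p. snd (ps_run n p imp ord p) j i (x ! i))"

end

theory Submission
  imports Defs
begin

lemma card2: "card {j. j < (2::nat) \<and> P j} = (if P 0 then 1 else 0) + (if P 1 then 1 else 0)"
proof -
  have e: "(j::nat) < 2 \<longleftrightarrow> j = 0 \<or> j = 1" for j by auto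
  have "{j. j < (2::nat) \<and> P j} = (if P 0 then {0} else {}) \<union> (if P 1 then {1} else {})"
    unfolding e by (rule set_eqI) (cases "P 0"; cases "P 1"; fastforce)
  then show ?thesis by auto
qed
lemma set2: "{f j itm | j itm. j < (2::nat) \<and> g j = Some itm} =
   (case g 0 of None \<Rightarrow> {} | Some a \<Rightarrow> {f 0 a}) \<union> (case g 1 of None \<Rightarrow> {} | Some a \<Rightarrow> {f 1 a})"
proof -
  have e: "(j::nat) < 2 \<longleftrightarrow> j = 0 \<or> j = 1" for j by auto
  show ?thesis unfolding e by (rule set_eqI) (cases "g 0"; cases "g 1"; fastforce)
qed

lemma fext: 
  assumes "\<And>i itm. i \<ge> 3 \<Longrightarrow> f i itm = g i itm" "\<And>i itm. itm \<ge> 2 \<Longrightarrow> f i itm = g i itm"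
   "f 0 0 = g 0 0" "f 0 1 = g 0 1" "f 1 0 = g 1 0" "f 1 1 = g 1 1" "f 2 0 = g 2 0" "f 2 1 = g 2 1"
  shows "f = (g :: nat \<Rightarrow> nat \<Rightarrow> real)"
proof (intro ext)
  fix i itm :: nat
  show "f i itm = g i itm"
  proof (cases "i \<ge> 3 \<or> itm \<ge> 2")
    case True then show ?thesis using assms(1,2) by auto
  next
    case False
    then have "i = 0 \<or> i = 1 \<or> i = 2" "itm = 0 \<or> itm = 1" by auto
    then show ?thesis using assms(3-8) by auto
  qed
qed

lemma eext: 
  assumes "\<And>j. j \<ge> 2 \<Longrightarrow> f j = g j" "f 0 = g 0" "f 1 = g 1"
  shows "f = (g :: nat \<Rightarrow> nat \<Rightarrow> nat \<Rightarrow> real)"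
proof (rule ext)
  fix j :: nat
  show "f j = g j" using assms by (cases "j \<ge> 2") (auto simp: not_le less_Suc_eq numeral_2_eq_2)
qed

definition "I0 = (\<lambda>j::nat. if j = 0 then [0::nat, 1, 2] else [2, 0, 1])"
definition "O0 = (\<lambda>(j::nat) (i::nat). [0::nat, 1])"

definition mkS :: "real list \<Rightarrow> supplyT" where
  "mkS xs i itm = (if i < 3 \<and> itm < 2 then xs ! (2*i+itm) else 1)"
definition mkE :: "real list \<Rightarrow> real list \<Rightarrow> eatenT" where
  "mkE as bs j i itm = (if i < 3 \<and> itm < 2 then (if j = 0 then as ! (2*i+itm) else if j = 1 then bs ! (2*i+itm) else 0) else 0)"

lemma I00[simp]: "I0 0 = [0,1,2]" and I01[simp]: "I0 (Suc 0) = [2,0,1]" and O0[simp]: "O0 j i = [0,1]"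
  by (auto simp: I0_def O0_def)
definition "I1 = I0(1 := [0,2,1])"
lemma I10[simp]: "I1 0 = [0,1,2]" and I11[simp]: "I1 (Suc 0) = [0,2,1]"
  by (auto simp: I1_def)
lemmas U = cnt_def card2 eats_def tgt_def mkS_def mkE_def

lemma d_a1: "delta 2 I0 O0 0 (mkS [1,1,1,1,1,1]) 1 = 1"
  by (simp add: delta_def set2 U)

lemma s_a1: "ps_step 2 I0 O0 0 (mkS [1,1,1,1,1,1], mkE [0,0,0,0,0,0] [0,0,0,0,0,0], 1)
   = (mkS [0,1,1,1,0,1], mkE [1,0,0,0,0,0] [0,0,0,0,1,0], 0)"
  unfolding ps_step_def Let_def
  apply (simp add: d_a1)
  apply (intro conjI fext eext)
  apply (simp_all add: U d_a1)
  done

lemma d_a2: "delta 2 I0 O0 (Suc 0) (mkS [0,1,1,1,0,1]) 1 = 1"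
  by (simp add: delta_def set2 U)

lemma s_a2: "ps_step 2 I0 O0 (Suc 0) (mkS [0,1,1,1,0,1], mkE [1,0,0,0,0,0] [0,0,0,0,1,0], 1)
   = (mkS [0,0,0,1,0,1], mkE [1,0,1,0,0,0] [0,1,0,0,1,0], 0)"
  unfolding ps_step_def Let_def
  apply (simp add: d_a2)
  apply (intro conjI fext eext)
  apply (simp_all add: U d_a2)
  done

lemma d_a3: "delta 2 I0 O0 2 (mkS [0,0,0,1,0,1]) 1 = 1"
  by (simp add: delta_def set2 U)

lemma s_a3: "ps_step 2 I0 O0 2 (mkS [0,0,0,1,0,1], mkE [1,0,1,0,0,0] [0,1,0,0,1,0], 1)
   = (mkS [0,0,0,0,0,0], mkE [1,0,1,0,0,1] [0,1,0,1,1,0], 0)"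
  unfolding ps_step_def Let_def
  apply (simp add: d_a3)
  apply (intro conjI fext eext)
  apply (simp_all add: U d_a3)
  done

lemma d_b1: "delta 2 I1 O0 0 (mkS [1,1,1,1,1,1]) 1 = 1/2"
  by (simp add: delta_def set2 U)

lemma s_b1: "ps_step 2 I1 O0 0 (mkS [1,1,1,1,1,1], mkE [0,0,0,0,0,0] [0,0,0,0,0,0], 1)
   = (mkS [0,1,1,1,1,1], mkE [1/2,0,0,0,0,0] [1/2,0,0,0,0,0], (1/2))"
  unfolding ps_step_def Let_def
  apply (simp add: d_b1)
  apply (intro conjI fext eext)
  apply (simp_all add: U d_b1)
  done

lemma d_b2: "delta 2 I1 O0 0 (mkS [0,1,1,1,1,1]) (1/2) = 1/2"
  by (simp add: delta_def set2 U)

lemma s_b2: "ps_step 2 I1 O0 0 (mkS [0,1,1,1,1,1], mkE [1/2,0,0,0,0,0] [1/2,0,0,0,0,0], (1/2))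
   = (mkS [0,0,1,1,1,1], mkE [1/2,1/2,0,0,0,0] [1/2,1/2,0,0,0,0], 0)"
  unfolding ps_step_def Let_def
  apply (simp add: d_b2)
  apply (intro conjI fext eext)
  apply (simp_all add: U d_b2)
  done

lemma d_b3: "delta 2 I1 O0 (Suc 0) (mkS [0,0,1,1,1,1]) 1 = 1"
  by (simp add: delta_def set2 U)

lemma s_b3: "ps_step 2 I1 O0 (Suc 0) (mkS [0,0,1,1,1,1], mkE [1/2,1/2,0,0,0,0] [1/2,1/2,0,0,0,0], 1)
   = (mkS [0,0,0,1,0,1], mkE [1/2,1/2,1,0,0,0] [1/2,1/2,0,0,1,0], 0)"
  unfolding ps_step_def Let_def
  apply (simp add: d_b3)
  apply (intro conjI fext eext)
  apply (simp_all add: U d_b3)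
  done

lemma d_b4: "delta 2 I1 O0 2 (mkS [0,0,0,1,0,1]) 1 = 1"
  by (simp add: delta_def set2 U)

lemma s_b4: "ps_step 2 I1 O0 2 (mkS [0,0,0,1,0,1], mkE [1/2,1/2,1,0,0,0] [1/2,1/2,0,0,1,0], 1)
   = (mkS [0,0,0,0,0,0], mkE [1/2,1/2,1,0,0,1] [1/2,1/2,0,1,1,0], 0)"
  unfolding ps_step_def Let_def
  apply (simp add: d_b4)
  apply (intro conjI fext eext)
  apply (simp_all add: U d_b4)
  done


lemma ph_go: "t > 0 \<Longrightarrow> ps_phase n impx ordx k (Suc f) (s,e,t) = ps_phase n impx ordx k f (ps_step n impx ordx k (s,e,t))"
  by simp
lemma ph_stop: "t \<le> 0 \<Longrightarrow> ps_phase n impx ordx k (Suc f) (s,e,t) = (s,e,t)"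
  by simp
lemma seven: "2 * 3 + 1 = Suc (Suc (Suc (Suc (Suc (Suc (Suc 0))))))" "2 * 3 + Suc 0 = Suc (Suc (Suc (Suc (Suc (Suc (Suc 0))))))" by simp_all

lemma run0: "ps_run 2 3 impx ordx 0 = (mkS [1,1,1,1,1,1], mkE [0,0,0,0,0,0] [0,0,0,0,0,0])"
  by (simp, intro conjI fext eext) (simp_all add: mkS_def mkE_def)

lemma h: "(0::real) < 1/2" by simp
lemma runSuc: "ps_run n p impx ordx k = (s,e) \<Longrightarrow> ps_phase n impx ordx k (n*p+1) (s,e,1) = (s',e',t') \<Longrightarrow> ps_run n p impx ordx (Suc k) = (s',e')"
  by simp
lemma ph_A0: "ps_phase 2 I0 O0 (0) (2*3+1) (mkS [1,1,1,1,1,1], mkE [0,0,0,0,0,0] [0,0,0,0,0,0], 1) = (mkS [0,1,1,1,0,1], mkE [1,0,0,0,0,0] [0,0,0,0,1,0], 0)"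
  unfolding seven(1) by (simp only: ph_go ph_stop s_a1 order.refl zero_less_one)
lemma ph_A1: "ps_phase 2 I0 O0 (Suc 0) (2*3+1) (mkS [0,1,1,1,0,1], mkE [1,0,0,0,0,0] [0,0,0,0,1,0], 1) = (mkS [0,0,0,1,0,1], mkE [1,0,1,0,0,0] [0,1,0,0,1,0], 0)"
  unfolding seven(1) by (simp only: ph_go ph_stop s_a2 order.refl zero_less_one)
lemma ph_A2: "ps_phase 2 I0 O0 (2) (2*3+1) (mkS [0,0,0,1,0,1], mkE [1,0,1,0,0,0] [0,1,0,0,1,0], 1) = (mkS [0,0,0,0,0,0], mkE [1,0,1,0,0,1] [0,1,0,1,1,0], 0)"
  unfolding seven(1) by (simp only: ph_go ph_stop s_a3 order.refl zero_less_one)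
lemma ph_B0: "ps_phase 2 I1 O0 (0) (2*3+1) (mkS [1,1,1,1,1,1], mkE [0,0,0,0,0,0] [0,0,0,0,0,0], 1) = (mkS [0,0,1,1,1,1], mkE [1/2,1/2,0,0,0,0] [1/2,1/2,0,0,0,0], 0)"
  unfolding seven(1) by (simp only: ph_go ph_stop s_b1 s_b2 h order.refl zero_less_one)
lemma ph_B1: "ps_phase 2 I1 O0 (Suc 0) (2*3+1) (mkS [0,0,1,1,1,1], mkE [1/2,1/2,0,0,0,0] [1/2,1/2,0,0,0,0], 1) = (mkS [0,0,0,1,0,1], mkE [1/2,1/2,1,0,0,0] [1/2,1/2,0,0,1,0], 0)"
  unfolding seven(1) by (simp only: ph_go ph_stop s_b3 order.refl zero_less_one)
lemma ph_B2: "ps_phase 2 I1 O0 (2) (2*3+1) (mkS [0,0,0,1,0,1], mkE [1/2,1/2,1,0,0,0] [1/2,1/2,0,0,1,0], 1) = (mkS [0,0,0,0,0,0], mkE [1/2,1/2,1,0,0,1] [1/2,1/2,0,1,1,0], 0)"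
  unfolding seven(1) by (simp only: ph_go ph_stop s_b4 order.refl zero_less_one)

lemma runA: "ps_run 2 3 I0 O0 3 = (mkS [0,0,0,0,0,0], mkE [1,0,1,0,0,1] [0,1,0,1,1,0])"
proof -
  have r: "ps_run 2 3 I0 O0 (Suc (Suc 0)) = (mkS [0,0,0,1,0,1], mkE [1,0,1,0,0,0] [0,1,0,0,1,0])" (is "_ = ?R")
    by (rule runSuc[OF runSuc[OF run0 ph_A0] ph_A1])
  have r2: "ps_run 2 3 I0 O0 2 = ?R"
    using r by (simp add: numeral_2_eq_2)
  show ?thesis using runSuc[OF r2 ph_A2] by simp
qed
lemma runB: "ps_run 2 3 I1 O0 3 = (mkS [0,0,0,0,0,0], mkE [1/2,1/2,1,0,0,1] [1/2,1/2,0,1,1,0])"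
proof -
  have r: "ps_run 2 3 I1 O0 (Suc (Suc 0)) = (mkS [0,0,0,1,0,1], mkE [1/2,1/2,1,0,0,0] [1/2,1/2,0,0,1,0])" (is "_ = ?R")
    by (rule runSuc[OF runSuc[OF run0 ph_B0] ph_B1])
  have r2: "ps_run 2 3 I1 O0 2 = ?R"
    using r by (simp add: numeral_2_eq_2)
  show ?thesis using runSuc[OF r2 ph_B2] by simp
qed

lemma p3: "(\<Prod>i<(3::nat). f i) = f 0 * f 1 * (f 2 :: real)"
  by (simp add: eval_nat_numeral)

lemma lexA: "lexips 2 3 I0 O0 1 = (\<lambda>x. (\<Prod>i<3. mkE [1,0,1,0,0,1] [0,1,0,1,1,0] 1 i (x!i)))"
  unfolding lexips_def runA by simp
lemma lexB: "lexips 2 3 I1 O0 1 = (\<lambda>x. (\<Prod>i<3. mkE [1/2,1/2,1,0,0,1] [1/2,1/2,0,1,1,0] 1 i (x!i)))"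
  unfolding lexips_def runB by simp

lemma bund: "bundles 2 3 = {[0,0,0],[0,0,1],[0,1,0],[0,1,1],[1,0,0],[1,0,1],[1,1,0],[1,1,1]}"
proof (rule set_eqI)
  fix x :: "nat list"
  show "x \<in> bundles 2 3 \<longleftrightarrow> x \<in> {[0,0,0],[0,0,1],[0,1,0],[0,1,1],[1,0,0],[1,0,1],[1,1,0],[1,1,1]}"
  proof
    assume "x \<in> bundles 2 3"
    then have l: "length x = 3" and a: "\<forall>i<3. x ! i < 2" by (auto simp: bundles_def)
    from l obtain a0 a1 a2 where x: "x = [a0,a1,a2]"
      by (metis (no_types) length_0_conv length_Suc_conv numeral_3_eq_3)
    have "x!0 < 2" "x!1 < 2" "x!2 < 2" using a by auto
    then have "a0 < 2" "a1 < 2" "a2 < 2" using x by auto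
    then have "a0 = 0 \<or> a0 = 1" "a1 = 0 \<or> a1 = 1" "a2 = 0 \<or> a2 = 1" by auto
    then show "x \<in> {[0,0,0],[0,0,1],[0,1,0],[0,1,1],[1,0,0],[1,0,1],[1,1,0],[1,1,1]}"
      using x by auto
  next
    assume "x \<in> {[0,0,0],[0,0,1],[0,1,0],[0,1,1],[1,0,0],[1,0,1],[1,1,0],[1,1,1]}"
    then show "x \<in> bundles 2 3"
      by (auto simp: bundles_def less_Suc_eq eval_nat_numeral)
  qed
qed

lemma upsum: "finite B \<Longrightarrow> x \<in> B \<Longrightarrow> sum f (upper imp ord j B x) = sum (\<lambda>y. if lex_pref imp ord j y x \<or> y = x then f y else 0) B"
proof -
  assume "finite B" "x \<in> B"
  then have "upper imp ord j B x = {y \<in> B. lex_pref imp ord j y x \<or> y = x}"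
    by (auto simp: upper_def)
  then show ?thesis using \<open>finite B\<close> by (simp add: sum.inter_filter)
qed

lemma bi: "better_in [0,Suc 0] a b \<longleftrightarrow> a = 0 \<and> b = 1"
proof
  assume "better_in [0,Suc 0] a b"
  then obtain u v where "u < v" "v < 2" "[0,1] ! u = a" "[0,1] ! v = b" by (auto simp: better_in_def)
  moreover then have "u = 0" "v = 1" by auto
  ultimately show "a = 0 \<and> b = 1" by auto
next
  assume "a = 0 \<and> b = 1"
  then show "better_in [0,Suc 0] a b" unfolding better_in_def by (rule_tac x=0 in exI, rule_tac x=1 in exI) auto
qed

lemma ex3: "(\<exists>k<Suc (Suc (Suc 0)). P k) \<longleftrightarrow> P 0 \<or> P 1 \<or> P 2"
  by (auto simp: eval_nat_numeral less_Suc_eq)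
lemma all1: "(\<forall>k<Suc 0. P k) \<longleftrightarrow> P 0" by auto
lemma all2: "(\<forall>k<(2::nat). P k) \<longleftrightarrow> P 0 \<and> P 1"
  by (auto simp: eval_nat_numeral less_Suc_eq)

lemma lp: "lex_pref I0 O0 1 y x \<longleftrightarrow> (y!2 = 0 \<and> x!2 = 1) \<or> (y!2 = x!2 \<and> y!0 = 0 \<and> x!0 = 1)
   \<or> (y!2 = x!2 \<and> y!0 = x!0 \<and> y!1 = 0 \<and> x!1 = 1)"
  unfolding lex_pref_def by (simp add: I0_def O0_def ex3 all1 all2 bi) blast


lemma valA: "x \<in> bundles 2 3 \<Longrightarrow> lexips 2 3 I0 O0 1 x = (if x = [1,1,0] then 1 else 0)"
  unfolding bund lexA p3 by (auto simp: mkE_def)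
lemma valB: "x \<in> bundles 2 3 \<Longrightarrow> lexips 2 3 I1 O0 1 x = (if x = [0,1,0] then 1/2 else 0) + (if x = [1,1,0] then 1/2 else 0)"
  unfolding bund lexB p3 by (auto simp: mkE_def)

lemma up_sub: "x \<in> B \<Longrightarrow> upper imp ord j B x \<subseteq> B"
  by (auto simp: upper_def)

lemma fin_up: "finite (upper imp ord j (bundles 2 3) x)"
  by (simp add: upper_def bund)

lemma key: "[1,1,0] \<in> upper I0 O0 1 (bundles 2 3) x \<Longrightarrow> [0,1,0] \<in> upper I0 O0 1 (bundles 2 3) x"
  unfolding upper_def by (auto simp: lp[unfolded One_nat_def] bund)

theorem mainTheorem5:
  fixes imp imp' :: "nat \<Rightarrow> nat list" and ord :: "nat \<Rightarrow> nat \<Rightarrow> nat list"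
  assumes "ord = (\<lambda>j i. [0, 1])"
    and "imp = (\<lambda>j. if j = 0 then [0, 1, 2] else [2, 0, 1])"
    and "imp' = imp(1 := [0, 2, 1])"
  shows "sd_weak_dom imp ord 1 (bundles 2 3) (lexips 2 3 imp' ord 1) (lexips 2 3 imp ord 1)
       \<and> (\<exists>x \<in> bundles 2 3. lexips 2 3 imp' ord 1 x \<noteq> lexips 2 3 imp ord 1 x)"
proof -
  have e: "ord = O0" "imp = I0" "imp' = I1" using assms by (auto simp: O0_def I0_def I1_def)
  have A: "(\<Sum>y\<in>upper I0 O0 1 (bundles 2 3) x. lexips 2 3 I0 O0 1 y)
      = (if [1,1,0] \<in> upper I0 O0 1 (bundles 2 3) x then 1 else 0)" if "x \<in> bundles 2 3" for x
  proof -
    have "(\<Sum>y\<in>upper I0 O0 1 (bundles 2 3) x. lexips 2 3 I0 O0 1 y)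
        = (\<Sum>y\<in>upper I0 O0 1 (bundles 2 3) x. (if y = [1,1,0] then 1 else 0))"
      by (rule sum.cong[OF refl]) (use up_sub[OF that] valA in blast)
    also have "\<dots> = (if [1,1,0] \<in> upper I0 O0 1 (bundles 2 3) x then 1 else 0)"
      using fin_up by (simp add: sum.delta')
    finally show ?thesis .
  qed
  have B: "(\<Sum>y\<in>upper I0 O0 1 (bundles 2 3) x. lexips 2 3 I1 O0 1 y)
      = (if [0,1,0] \<in> upper I0 O0 1 (bundles 2 3) x then 1/2 else 0)
       + (if [1,1,0] \<in> upper I0 O0 1 (bundles 2 3) x then 1/2 else 0)" if "x \<in> bundles 2 3" for x
  proof -
    have "(\<Sum>y\<in>upper I0 O0 1 (bundles 2 3) x. lexips 2 3 I1 O0 1 y)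
        = (\<Sum>y\<in>upper I0 O0 1 (bundles 2 3) x. (if y = [0,1,0] then 1/2 else 0) + (if y = [1,1,0] then 1/2 else 0))"
      by (rule sum.cong[OF refl]) (use up_sub[OF that] valB in blast)
    also have "\<dots> = (if [0,1,0] \<in> upper I0 O0 1 (bundles 2 3) x then 1/2 else 0)
       + (if [1,1,0] \<in> upper I0 O0 1 (bundles 2 3) x then 1/2 else 0)"
      using fin_up by (simp add: sum.distrib sum.delta')
    finally show ?thesis .
  qed
  have "sd_weak_dom I0 O0 1 (bundles 2 3) (lexips 2 3 I1 O0 1) (lexips 2 3 I0 O0 1)"
    unfolding sd_weak_dom_def
  proof
    fix x assume x: "x \<in> bundles 2 3"
    show "(\<Sum>y\<in>upper I0 O0 1 (bundles 2 3) x. lexips 2 3 I0 O0 1 y)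
        \<le> (\<Sum>y\<in>upper I0 O0 1 (bundles 2 3) x. lexips 2 3 I1 O0 1 y)"
      unfolding A[OF x] B[OF x] using key[of x] by auto
  qed
  moreover have m: "[0,1,0] \<in> bundles 2 3" by (simp add: bund)
  moreover have "lexips 2 3 I1 O0 1 [0,1,0] \<noteq> lexips 2 3 I0 O0 1 [0,1,0]"
    unfolding valA[OF m] valB[OF m] by simp
  ultimately show ?thesis unfolding e by blast
qed
end
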